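(* Let $I_n:=\iint_T \frac{(-\ln xy)^n}{xy}\,dx\,dy$. Then $I_n\sim 2\,n!$ as $n\to\infty$. More precisely, for every fixed integer $K\ge1$, \[ \frac{I_n}{n!}=\sum_{j=1}^{K}\binom{2j}{j}\frac{1}{j^{\,n+2}} + O\!\left((K+1)^{-n}\right)\qquad(n\to\infty), \] i.e. $I_n/n!\approx 2+\frac{6}{2^{n+2}}+\frac{20}{3^{n+2}}+\frac{70}{4^{n+2}}+\cdots$.
   Context: $T:=\{(x,y)\in[0,1]^2 : x+y\ge 1\}$. *)

theory Defs
  imports "HOL-Analysis.Analysis" "HOL-Library.Landau_Symbols"
begin

definition T :: "(real \<times> real) set" where
  "T = {(x, y). 0 \<le> x \<and> x \<le> 1 \<and> 0 \<le> y \<and> y \<le> 1 \<and> x + y \<ge> 1}"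

definition integrand :: "nat \<Rightarrow> real \<times> real \<Rightarrow> real" where
  "integrand n = (\<lambda>(x, y). (- ln (x * y)) ^ n / (x * y))"

definition I :: "nat \<Rightarrow> real" where
  "I n = (\<integral>p\<in>T. integrand n p \<partial>lborel)"

end

theory Submission
  imports Defs "HOL-Probability.Distributions"
begin


definition cc :: "nat \<Rightarrow> real" where "cc j = real ((2*j) choose j)"

lemma cbin_aux: "(k+1) * X = (2*k+2) * (A::nat) \<Longrightarrow> (k+1) * A = (2*k+1) * B \<Longrightarrow> (k+1) * X = 2*(2*k+1)*B"
proof -
  assume h1: "(k+1) * X = (2*k+2) * A" and h2: "(k+1) * A = (2*k+1) * B"
  have "(k+1) * ((k+1) * X) = (k+1) * (2*(2*k+1)*B)"
  proof -
    have "(k+1) * ((k+1) * X) = (2*k+2) * ((k+1) * A)" using h1 by (metis mult.left_commute)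
    also have "\<dots> = (k+1) * (2*(2*k+1)*B)" using h2 by simp
    finally show ?thesis .
  qed
  thus ?thesis using mult_left_cancel[of "k+1" "(k+1)*X" "2*(2*k+1)*B"] by linarith
qed

lemma cbin_rec: "(Suc k) * ((2 * Suc k) choose Suc k) = 2 * (2*k+1) * ((2*k) choose k)"
proof -
  have a: "Suc k * (Suc (2*k+1) choose Suc k) = Suc (2*k+1) * ((2*k+1) choose k)"
    by (rule Suc_times_binomial)
  have b: "(2*k+1 - k) * ((2*k+1) choose k) = (2*k+1) * ((2*k+1-1) choose k)"
    by (rule binomial_absorb_comp)
  have b': "(k+1) * ((2*k+1) choose k) = (2*k+1) * ((2*k) choose k)" using b
    by (metis add_diff_cancel_right' diff_add_inverse2 mult_2 add.commute add.left_commute)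
  have a': "(k+1) * ((2 * Suc k) choose Suc k) = (2*k+2) * ((2*k+1) choose k)"
    using a by (metis Suc_eq_plus1 mult_Suc_right add_2_eq_Suc' add.commute mult_2 add_Suc_right)
  show ?thesis using cbin_aux[OF a' b'] by simp
qed

lemma gchoose_half: "((-1/2::real) gchoose k) * (-4)^k = cc k"
proof (induction k)
  case 0 then show ?case by (simp add: cc_def)
next
  case (Suc k)
  have m: "((-1/2::real) gchoose k) * fact k = (\<Prod>i = 0..<k. -1/2 - of_nat i)"
    by (rule gbinomial_mult_fact')
  have m2: "((-1/2::real) gchoose Suc k) * fact (Suc k) = (\<Prod>i = 0..<Suc k. -1/2 - of_nat i)"
    by (rule gbinomial_mult_fact')
  have "((-1/2::real) gchoose Suc k) * fact (Suc k) = ((-1/2::real) gchoose k) * fact k * (-1/2 - k)"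
    using m m2 by simp
  hence e0: "((-1/2::real) gchoose Suc k) * fact k * (Suc k) = ((-1/2::real) gchoose k) * fact k * (-1/2 - k)"
    by (simp add: algebra_simps)
  hence e: "((-1/2::real) gchoose Suc k) * (Suc k) = ((-1/2::real) gchoose k) * (-1/2 - k)"
    by (metis (no_types, lifting) fact_gt_zero mult.commute mult.left_commute mult_cancel_left order_less_irrefl)
  have "real (Suc k) * (((-1/2::real) gchoose Suc k) * (-4)^Suc k) = ((-1/2::real) gchoose k) * (-4)^k * (2 + 4*k)"
  proof -
    have "real (Suc k) * (((-1/2::real) gchoose Suc k) * (-4)^Suc k) = (((-1/2::real) gchoose Suc k) * real (Suc k)) * (-4) * (-4)^k"
      by (simp only: power_Suc mult_ac)
    also have "\<dots> = ((-1/2::real) gchoose k) * (-1/2 - k) * (-4) * (-4)^k" by (simp only: e)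
    also have "\<dots> = ((-1/2::real) gchoose k) * (-4)^k * (2 + 4*k)" by (simp add: algebra_simps)
    finally show ?thesis .
  qed
  also have "\<dots> = real (Suc k) * cc (Suc k)"
  proof -
    have "real (Suc k) * cc (Suc k) = real (Suc k * ((2 * Suc k) choose Suc k))"
      unfolding cc_def by (simp only: of_nat_mult)
    also have "\<dots> = real (2 * (2*k+1) * ((2*k) choose k))" by (simp only: cbin_rec)
    also have "\<dots> = (2 + 4*k) * cc k" unfolding cc_def by (simp add: algebra_simps)
    finally show ?thesis using Suc.IH by simp
  qed
  finally show ?case by (subst (asm) mult_left_cancel) auto
qed


lemma q_series: assumes "\<bar>t\<bar> < 1/4" shows "(\<lambda>n. cc n * t^n) sums (1 / sqrt (1 - 4*t))"
proof -
  have "\<bar>-4*t\<bar> < 1" using assms by simp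
  from gen_binomial_real[OF this, of "-1/2"]
  have "(\<lambda>n. ((-1/2) gchoose n) * (-4*t)^n) sums (1 + -4*t) powr (-1/2)" .
  moreover have "((-1/2::real) gchoose n) * (-4*t)^n = cc n * t^n" for n
  proof -
    have "(-4*t)^n = (-4)^n * t^n" by (simp only: power_mult_distrib)
    thus ?thesis using gchoose_half[of n] by (metis mult.assoc)
  qed
  moreover have "(1 + -4*t) powr (-1/2) = 1 / sqrt (1 - 4*t)"
    using assms by (simp add: powr_minus_divide powr_half_sqrt)
  ultimately show ?thesis by simp
qed

lemma cc_nonneg: "cc n \<ge> 0" by (simp add: cc_def)

lemma q_tail:
  assumes "0 \<le> t" "t \<le> 1/8"
  shows "0 \<le> 1 / sqrt (1 - 4*t) - (\<Sum>j\<le>K. cc j * t^j)"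
    and "1 / sqrt (1 - 4*t) - (\<Sum>j\<le>K. cc j * t^j) \<le> 8^(K+1) * sqrt 2 * t^(K+1)"
proof -
  have s1: "(\<lambda>n. cc n * t^n) sums (1 / sqrt (1 - 4*t))" using assms by (intro q_series) auto
  have s2: "(\<lambda>n. cc n * (1/8)^n) sums (1 / sqrt (1 - 4*(1/8)))" by (intro q_series) auto
  have e2: "1 / sqrt (1 - 4*(1/8::real)) = sqrt 2"
    by (simp add: real_sqrt_divide)
  define a where "a = (\<lambda>n. if n \<le> K then 0 else cc n * t^n)"
  have sa: "a sums (1 / sqrt (1 - 4*t) - (\<Sum>j\<le>K. cc j * t^j))"
  proof -
    have "(\<lambda>n. cc n * t^n - (if n \<in> {..K} then cc n * t^n else 0)) sums (1 / sqrt (1 - 4*t) - (\<Sum>j\<in>{..K}. cc j * t^j))"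
      by (intro sums_diff s1 sums_If_finite_set) auto
    moreover have "(\<lambda>n. cc n * t^n - (if n \<in> {..K} then cc n * t^n else 0)) = a"
      by (auto simp: a_def)
    ultimately show ?thesis by simp
  qed
  have an: "a n \<ge> 0" for n using assms cc_nonneg by (auto simp: a_def)
  show "0 \<le> 1 / sqrt (1 - 4*t) - (\<Sum>j\<le>K. cc j * t^j)"
    using sums_le[of "\<lambda>_. 0" a, OF _ sums_zero sa] an by auto
  have sb: "(\<lambda>n. (8*t)^(K+1) * (cc n * (1/8)^n)) sums ((8*t)^(K+1) * sqrt 2)"
  proof -
    have s2': "(\<lambda>n. cc n * (1/8)^n) sums sqrt 2" using s2 by (simp only: e2)
    show ?thesis by (rule sums_mult[OF s2'])
  qed
  have le: "a n \<le> (8*t)^(K+1) * (cc n * (1/8)^n)" for n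
  proof (cases "n \<le> K")
    case True then show ?thesis using assms cc_nonneg by (simp add: a_def)
  next
    case False
    have "(8*t)^n \<le> (8*t)^(K+1)"
      using False assms by (intro power_decreasing) auto
    hence "cc n * (8*t)^n \<le> cc n * (8*t)^(K+1)" using cc_nonneg by (intro mult_left_mono) auto
    moreover have "cc n * t^n = cc n * (8*t)^n * (1/8)^n"
      by (simp add: power_mult_distrib field_simps)
    ultimately have "cc n * t^n \<le> cc n * (8*t)^(K+1) * (1/8)^n"
      by (metis mult_right_mono zero_le_divide_1_iff zero_le_numeral zero_le_power)
    then show ?thesis using False by (simp add: a_def mult_ac)
  qed
  have "1 / sqrt (1 - 4*t) - (\<Sum>j\<le>K. cc j * t^j) \<le> (8*t)^(K+1) * sqrt 2"
    using sums_le[OF _ sa sb] le by auto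
  thus "1 / sqrt (1 - 4*t) - (\<Sum>j\<le>K. cc j * t^j) \<le> 8^(K+1) * sqrt 2 * t^(K+1)"
    by (simp add: power_mult_distrib mult_ac)
qed


definition rp :: "real \<Rightarrow> real" where "rp t = (1 + sqrt (1 - 4*t)) / 2"
definition f2 :: "real \<Rightarrow> real" where "f2 t = - 2 * ln (rp t)"
definition PK :: "nat \<Rightarrow> real \<Rightarrow> real" where "PK K t = (\<Sum>j=1..K. cc j * t^j / j)"

lemma f2_deriv:
  assumes "t < 1/4"
  shows "(f2 has_real_derivative (4 / (sqrt (1-4*t) * (1 + sqrt (1-4*t))))) (at t)"
proof -
  have p: "0 < 1 - 4*t" using assms by simp
  hence sp: "sqrt (1-4*t) > 0" by simp
  have "((\<lambda>t. - 2 * ln ((1 + sqrt (1 - 4*t)) / 2)) has_real_derivative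
     (- 2 * ((inverse (sqrt (1 - 4*t)) / 2 * (- 4)) / 2) / ((1 + sqrt (1 - 4*t)) / 2))) (at t)"
  proof -
    have sp3: "0 < 1 + sqrt (1 - 4*t)" using sp by linarith
    have sp2: "(1 + sqrt (1-4*t))/2 > 0" using sp3 by simp
    show ?thesis using p sp sp2 sp3 by (auto intro!: derivative_eq_intros)
  qed
  moreover have "(- 2 * ((inverse (sqrt (1 - 4*t)) / 2 * (- 4)) / 2) / ((1 + sqrt (1 - 4*t)) / 2))
     = 4 / (sqrt (1-4*t) * (1 + sqrt (1-4*t)))"
    using sp by (simp add: field_simps)
  ultimately show ?thesis unfolding f2_def rp_def by simp
qed

lemma f2_deriv_mult:
  assumes "t < 1/4"
  shows "t * (4 / (sqrt (1-4*t) * (1 + sqrt (1-4*t)))) = 1 / sqrt (1 - 4*t) - 1"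
proof -
  define s where "s = sqrt (1-4*t)"
  have sp: "s > 0" using assms by (simp add: s_def)
  have s2: "s^2 = 1 - 4*t" using assms by (simp add: s_def)
  have "t * (4 / (s * (1 + s))) = (1 - s^2) / (s * (1+s))" using s2 by (simp add: field_simps)
  also have "\<dots> = ((1 - s) * (1 + s)) / (s * (1+s))" by (simp add: power2_eq_square algebra_simps)
  also have "\<dots> = (1 - s) / s" using sp by simp
  also have "\<dots> = 1 / s - 1" using sp by (simp add: field_simps)
  finally show ?thesis by (simp add: s_def)
qed

lemma PK_deriv: "(PK K has_real_derivative (\<Sum>j=1..K. cc j * t^(j-1))) (at t)"
proof -
  have "((\<lambda>t. \<Sum>j=1..K. cc j * t^j / j) has_real_derivative (\<Sum>j=1..K. cc j * (j * t^(j-1)) / j)) (at t)"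
    by (auto intro!: derivative_eq_intros sum.cong)
  moreover have "(\<Sum>j=1..K. cc j * (j * t^(j-1)) / j) = (\<Sum>j=1..K. cc j * t^(j-1))"
    by (simp add: ac_simps)
  ultimately show ?thesis unfolding PK_def by metis
qed

lemma PK_deriv_mult: "t * (\<Sum>j=1..K. cc j * t^(j-1)) = (\<Sum>j\<le>K. cc j * t^j) - 1"
proof -
  have "t * (\<Sum>j=1..K. cc j * t^(j-1)) = (\<Sum>j=1..K. cc j * t^j)"
    by (simp add: sum_distrib_left) (intro sum.cong, auto simp: power_eq_if)
  moreover have "(\<Sum>j\<le>K. cc j * t^j) = cc 0 * t^0 + (\<Sum>j=1..K. cc j * t^j)"
    by (simp add: atMost_atLeast0 sum.atLeast_Suc_atMost)
  moreover have "cc 0 = 1" by (simp add: cc_def)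
  ultimately show ?thesis by simp
qed

lemma f2_small:
  assumes "0 \<le> t" "t \<le> 1/8"
  shows "0 \<le> f2 t - PK K t" "f2 t - PK K t \<le> 8^(K+1) * sqrt 2 * t^(K+1)"
proof -
  define A where "A = 8^(K+1) * sqrt 2"
  define h where "h = (\<lambda>t. f2 t - PK K t)"
  define h' where "h' = (\<lambda>t. 4 / (sqrt (1-4*t) * (1 + sqrt (1-4*t))) - (\<Sum>j=1..K. cc j * t^(j-1)))"
  have hd: "\<And>x. x < 1/4 \<Longrightarrow> (h has_real_derivative h' x) (at x)"
    unfolding h_def h'_def by (intro DERIV_diff f2_deriv PK_deriv)
  have h0: "h 0 = 0" by (simp add: h_def f2_def rp_def PK_def)
  have hb: "0 \<le> h' x \<and> h' x \<le> A * x^K" if "0 < x" "x \<le> 1/8" for x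
  proof -
    have "x * h' x = 1 / sqrt (1 - 4*x) - (\<Sum>j\<le>K. cc j * x^j)"
      unfolding h'_def right_diff_distrib using f2_deriv_mult[of x] PK_deriv_mult[of x K] that by simp
    hence "0 \<le> x * h' x" "x * h' x \<le> A * x^(K+1)"
      using q_tail[of x K] that by (auto simp: A_def)
    thus ?thesis using that
      by (auto simp: zero_le_mult_iff mult.commute[of x] mult.assoc[symmetric] mult_le_cancel_right)
  qed
  have "0 \<le> h t \<and> h t \<le> A * t^(K+1)"
  proof (cases "t = 0")
    case True then show ?thesis using h0 by simp
  next
    case False
    hence tp: "0 < t" using assms by simp
    obtain z where z: "0 < z" "z < t" "h t - h 0 = (t - 0) * h' z"
      using MVT2[OF tp, of h h'] hd assms by force
    have b: "0 \<le> h' z" "h' z \<le> A * z^K" using hb[of z] z assms by auto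
    have "A * z^K \<le> A * t^K" using z by (intro mult_left_mono power_mono) (auto simp: A_def)
    hence "t * h' z \<le> t * (A * t^K)" using b tp by (intro mult_left_mono) auto
    thus ?thesis using z b h0 tp by (simp add: mult_ac)
  qed
  thus "0 \<le> f2 t - PK K t" "f2 t - PK K t \<le> 8^(K+1) * sqrt 2 * t^(K+1)"
    by (auto simp: h_def A_def)
qed


definition ff :: "real \<Rightarrow> real" where "ff t = (if 1/4 \<le> t then - ln t else f2 t)"
definition MK :: "nat \<Rightarrow> real" where "MK K = 8^(K+1) * (sqrt 2 + 2 + (\<Sum>j=1..K. cc j))"

lemma PK_nonneg: "0 \<le> t \<Longrightarrow> 0 \<le> PK K t"
  unfolding PK_def by (intro sum_nonneg) (auto intro!: divide_nonneg_nonneg mult_nonneg_nonneg cc_nonneg)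

lemma PK_le: assumes "0 \<le> t" "t \<le> 1" shows "PK K t \<le> (\<Sum>j=1..K. cc j)"
  unfolding PK_def
proof (intro sum_mono)
  fix j assume j: "j \<in> {1..K}"
  have "t^j \<le> 1" using assms by (simp add: power_le_one)
  hence "t^j / j \<le> 1" using j assms by (simp add: divide_le_eq)
  hence "cc j * (t^j / j) \<le> cc j * 1" using cc_nonneg by (intro mult_left_mono) auto
  thus "cc j * t^j / j \<le> cc j" by simp
qed

lemma ff_range: assumes "0 < t" "t \<le> 1" shows "0 \<le> ff t" "ff t \<le> 2"
proof -
  have l2: "ln (2::real) \<le> 1" using ln_2_less_1 by simp
  have l4: "ln (4::real) = 2 * ln 2"
    using ln_realpow[of 2 2] by simp
  have "0 \<le> ff t \<and> ff t \<le> 2"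
  proof (cases "1/4 \<le> t")
    case True
    have "ln t \<le> 0" using assms by simp
    moreover have "- ln t \<le> ln 4"
      using True ln_le_cancel_iff[of "1/4" t] by (simp add: ln_div)
    ultimately show ?thesis using True l2 l4 by (simp add: ff_def)
  next
    case False
    have s: "0 \<le> sqrt (1 - 4*t)" "sqrt (1 - 4*t) \<le> 1" using False assms by auto
    hence r: "1/2 \<le> rp t" "rp t \<le> 1" by (auto simp: rp_def)
    have "ln (rp t) \<le> 0" using r by simp
    moreover have "ln (1/2) \<le> ln (rp t)" using r by simp
    hence "- ln 2 \<le> ln (rp t)" by (simp add: ln_div)
    ultimately show ?thesis using False l2 by (simp add: ff_def f2_def)
  qed
  thus "0 \<le> ff t" "ff t \<le> 2" by auto
qed

lemma ff_bound:
  assumes "0 < t" "t \<le> 1"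
  shows "ff t \<le> PK K t + MK K * t^(K+1)" "PK K t \<le> ff t + MK K * t^(K+1)"
proof -
  have "ff t \<le> PK K t + MK K * t^(K+1) \<and> PK K t \<le> ff t + MK K * t^(K+1)"
  proof (cases "t \<le> 1/8")
    case True
    hence e: "ff t = f2 t" by (simp add: ff_def)
    have b: "0 \<le> f2 t - PK K t" "f2 t - PK K t \<le> 8^(K+1) * sqrt 2 * t^(K+1)"
      using f2_small[of t K] True assms by auto
    have "8^(K+1) * sqrt 2 * t^(K+1) \<le> MK K * t^(K+1)"
      unfolding MK_def using assms cc_nonneg
      by (intro mult_right_mono mult_left_mono) (auto intro!: sum_nonneg add_nonneg_nonneg cc_nonneg)
    moreover have "0 \<le> MK K * t^(K+1)" unfolding MK_def using assms cc_nonneg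
      by (intro mult_nonneg_nonneg) (auto intro!: sum_nonneg add_nonneg_nonneg cc_nonneg)
    ultimately show ?thesis using b e by linarith
  next
    case False
    have "1 \<le> (8*t)^(K+1)" using False by (intro one_le_power) auto
    hence one: "1 \<le> 8^(K+1) * t^(K+1)" by (simp only: power_mult_distrib)
    define S where "S = (\<Sum>j=1..K. cc j)"
    have S0: "0 \<le> S" unfolding S_def using cc_nonneg by (auto intro!: sum_nonneg)
    have "sqrt 2 + 2 + S \<le> (sqrt 2 + 2 + S) * (8^(K+1) * t^(K+1))"
    proof -
      have P: "0 \<le> sqrt 2 + 2 + S" using S0 by (simp add: add_nonneg_nonneg)
      show ?thesis using mult_left_mono[OF one P] by simp
    qed
    hence M: "sqrt 2 + 2 + S \<le> MK K * t^(K+1)" by (simp add: MK_def S_def mult_ac)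
    have "0 \<le> PK K t" "PK K t \<le> S" using PK_nonneg[of t K] PK_le[of t K] assms by (auto simp: S_def)
    moreover have "0 \<le> ff t" "ff t \<le> 2" using ff_range assms by auto
    moreover have "0 \<le> sqrt (2::real)" by simp
    ultimately show ?thesis using M by linarith
  qed
  thus "ff t \<le> PK K t + MK K * t^(K+1)" "PK K t \<le> ff t + MK K * t^(K+1)" by auto
qed


lemma sub_exp_n:
  fixes \<phi> :: "real \<Rightarrow> real"
  assumes [measurable]: "\<phi> \<in> borel_measurable borel"
  shows "(\<integral>\<^sup>+t. ennreal (\<phi> t * indicator {exp (- real i)..exp 0} t) \<partial>lborel) =
         (\<integral>\<^sup>+s. ennreal (\<phi> (exp s) * exp s * indicator {- real i..0} s) \<partial>lborel)"
proof (rule nn_integral_substitution)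
  show "set_borel_measurable borel {exp (- real i)..exp 0} \<phi>"
    unfolding set_borel_measurable_def by measurable
qed (auto intro!: derivative_eq_intros continuous_intros)

lemma sub_exp:
  fixes \<phi> :: "real \<Rightarrow> real"
  assumes [measurable]: "\<phi> \<in> borel_measurable borel"
  shows "(\<integral>\<^sup>+t. ennreal (\<phi> t * indicator {0<..1} t) \<partial>lborel) =
         (\<integral>\<^sup>+s. ennreal (\<phi> (exp s) * exp s * indicator {..0} s) \<partial>lborel)"
proof -
  let ?A = "\<lambda>i. \<integral>\<^sup>+t. ennreal (\<phi> t * indicator {exp (- real i)..exp 0} t) \<partial>lborel"
  let ?B = "\<lambda>i. \<integral>\<^sup>+s. ennreal (\<phi> (exp s) * exp s * indicator {- real i..0} s) \<partial>lborel"
  have LA: "?A \<longlonglongrightarrow> (\<integral>\<^sup>+t. ennreal (\<phi> t * indicator {0<..1} t) \<partial>lborel)"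
  proof (rule nn_integral_LIMSEQ)
    have em: "exp (- real n) \<le> exp (- real m)" if "m \<le> n" for m n using that by simp
    show "incseq (\<lambda>i t. ennreal (\<phi> t * indicator {exp (- real i)..exp 0} t))"
      using em by (auto simp: incseq_def le_fun_def split: split_indicator intro!: ennreal_leI) (meson order_trans em)
    show "(\<lambda>t. ennreal (\<phi> t * indicator {exp (- real i)..exp 0} t)) \<in> borel_measurable lborel" for i
      by measurable
    fix t
    show "(\<lambda>i. ennreal (\<phi> t * indicator {exp (- real i)..exp 0} t)) \<longlonglongrightarrow> ennreal (\<phi> t * indicator {0<..1} t)"
    proof (cases "0 < t")
      case True
      obtain N :: nat where N: "- ln t < N" using reals_Archimedean2 by blast
      have "eventually (\<lambda>i. ennreal (\<phi> t * indicator {exp (- real i)..exp 0} t) = ennreal (\<phi> t * indicator {0<..1} t)) sequentially"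
        unfolding eventually_sequentially
      proof (intro exI allI impI)
        fix i assume "N \<le> i"
        hence "- ln t < i" using N by linarith
        hence "exp (- real i) < t" using True
          by (metis exp_less_cancel_iff exp_ln minus_less_iff)
        thus "ennreal (\<phi> t * indicator {exp (- real i)..exp 0} t) = ennreal (\<phi> t * indicator {0<..1} t)"
          using True by (auto split: split_indicator)
      qed
      then show ?thesis by (rule tendsto_eventually)
    next
      case False
      hence "t \<notin> {exp (- real i)..exp 0}" for i using exp_gt_zero[of "- real i"] by (auto simp del: exp_gt_zero)
      then show ?thesis using False by simp
    qed
  qed
  have LB: "?B \<longlonglongrightarrow> (\<integral>\<^sup>+s. ennreal (\<phi> (exp s) * exp s * indicator {..0} s) \<partial>lborel)"
  proof (rule nn_integral_LIMSEQ)
    show "incseq (\<lambda>i s. ennreal (\<phi> (exp s) * exp s * indicator {- real i..0} s))"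
      by (auto simp: incseq_def le_fun_def split: split_indicator intro!: ennreal_leI)
    show "(\<lambda>s. ennreal (\<phi> (exp s) * exp s * indicator {- real i..0} s)) \<in> borel_measurable lborel" for i
      by measurable
    fix s
    show "(\<lambda>i. ennreal (\<phi> (exp s) * exp s * indicator {- real i..0} s)) \<longlonglongrightarrow> ennreal (\<phi> (exp s) * exp s * indicator {..0} s)"
    proof (rule tendsto_eventually)
      obtain N :: nat where N: "- s < N" using reals_Archimedean2 by blast
      show "eventually (\<lambda>i. ennreal (\<phi> (exp s) * exp s * indicator {- real i..0} s) = ennreal (\<phi> (exp s) * exp s * indicator {..0} s)) sequentially"
        unfolding eventually_sequentially
        using N by (intro exI[of _ N] allI impI) (auto split: split_indicator)
    qed
  qed
  have eq: "?A = ?B" by (intro ext sub_exp_n) simp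
  from LA have LA': "?B \<longlonglongrightarrow> (\<integral>\<^sup>+t. ennreal (\<phi> t * indicator {0<..1} t) \<partial>lborel)"
    by (simp only: eq)
  show ?thesis by (rule LIMSEQ_unique[OF LA' LB])
qed


lemma gamma_j:
  assumes j: "j \<ge> 1"
  shows "(\<integral>\<^sup>+t. ennreal ((- ln t)^n / t * t^j * indicator {0<..1} t) \<partial>lborel) = ennreal (fact n / real j^(n+1))"
proof -
  have "(\<integral>\<^sup>+t. ennreal ((- ln t)^n / t * t^j * indicator {0<..1} t) \<partial>lborel) =
        (\<integral>\<^sup>+s. ennreal ((- ln (exp s))^n / exp s * exp s^j * exp s * indicator {..0} s) \<partial>lborel)"
    by (rule sub_exp) measurable
  also have "\<dots> = (\<integral>\<^sup>+s. ennreal ((- s)^n * exp (real j * s) * indicator {..0} s) \<partial>lborel)"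
    by (intro nn_integral_cong) (simp add: exp_of_nat_mult[symmetric])
  also have "\<dots> = \<bar>- 1 / real j\<bar> * (\<integral>\<^sup>+x. ennreal ((- (0 + (- 1 / real j) * x))^n * exp (real j * (0 + (- 1 / real j) * x)) * indicator {..0} (0 + (- 1 / real j) * x)) \<partial>lborel)"
    using j by (intro nn_integral_real_affine) auto
  also have "(\<integral>\<^sup>+x. ennreal ((- (0 + (- 1 / real j) * x))^n * exp (real j * (0 + (- 1 / real j) * x)) * indicator {..0} (0 + (- 1 / real j) * x)) \<partial>lborel)
     = (\<integral>\<^sup>+x. ennreal ((1 / real j)^n) * (ennreal (x^n * exp (- x)) * indicator {0..} x) \<partial>lborel)"
  proof (intro nn_integral_cong)
    fix x :: real
    have jp: "real j > 0" using j by simp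
    have i: "indicator {..0} (0 + (- 1 / real j) * x) = (indicator {0..} x :: real)"
      using jp by (auto split: split_indicator simp: field_simps)
    have e: "exp (real j * (0 + (- 1 / real j) * x)) = exp (- x)" using jp by simp
    have p: "(- (0 + (- 1 / real j) * x))^n = (1 / real j)^n * x^n" by (simp add: power_divide)
    show "ennreal ((- (0 + (- 1 / real j) * x))^n * exp (real j * (0 + (- 1 / real j) * x)) * indicator {..0} (0 + (- 1 / real j) * x))
       = ennreal ((1 / real j)^n) * (ennreal (x^n * exp (- x)) * indicator {0..} x)"
      unfolding i e p using jp
      by (auto split: split_indicator simp: ennreal_mult[symmetric] mult_ac)
  qed
  also have "\<dots> = ennreal ((1 / real j)^n) * (\<integral>\<^sup>+x. ennreal (x^n * exp (- x)) * indicator {0..} x \<partial>lborel)"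
    by (rule nn_integral_cmult) measurable
  also have "\<dots> = ennreal ((1 / real j)^n) * ennreal (fact n)"
    using nn_intergal_power_times_exp_Ici[of n] by simp
  finally show ?thesis using j
    by (simp add: ennreal_mult[symmetric] power_divide field_simps del: ennreal_of_nat_eq_real_of_nat)
qed


definition rm :: "real \<Rightarrow> real" where "rm t = (1 - sqrt (1 - 4*t)) / 2"

lemma rm_rp:
  assumes "0 < t" "t < 1/4"
  shows "rm t + rp t = 1" "rm t * rp t = t" "0 < rm t" "rm t < rp t" "rp t \<le> 1" "t \<le> rm t"
    "x * (1 - x) \<le> t \<longleftrightarrow> x \<le> rm t \<or> rp t \<le> x"
proof -
  define s where "s = sqrt (1 - 4*t)"
  have s0: "0 < s" "s < 1" using assms by (auto simp: s_def)
  have s2: "s * s = 1 - 4*t" using assms by (simp add: s_def)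
  show "rm t + rp t = 1" by (simp add: rm_def rp_def s_def[symmetric] field_simps)
  show p: "rm t * rp t = t" unfolding rm_def rp_def s_def[symmetric]
    using s2 by (simp add: field_simps)
  show "0 < rm t" "rm t < rp t" "rp t \<le> 1" using s0 by (auto simp: rm_def rp_def s_def[symmetric])
  have "t = rm t * rp t" using p by simp
  also have "\<dots> \<le> rm t * 1" using s0 by (intro mult_left_mono) (auto simp: rm_def rp_def s_def[symmetric])
  finally show "t \<le> rm t" by simp
  have e0: "(x - (1 - s) / 2) * (x - (1 + s) / 2) = x*x - x + (1 - s * s) / 4" by (simp add: field_simps)
  have e: "t - x * (1 - x) = (x - rm t) * (x - rp t)"
    unfolding rm_def rp_def s_def[symmetric] using s2 e0 by (simp add: algebra_simps)
  have "x * (1 - x) \<le> t \<longleftrightarrow> 0 \<le> (x - rm t) * (x - rp t)" using e by linarith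
  also have "\<dots> \<longleftrightarrow> x \<le> rm t \<or> rp t \<le> x"
    using s0 by (auto simp: zero_le_mult_iff rm_def rp_def s_def[symmetric])
  finally show "x * (1 - x) \<le> t \<longleftrightarrow> x \<le> rm t \<or> rp t \<le> x" .
qed

lemma ftc_inv:
  assumes "0 < a" "a \<le> b"
  shows "(\<integral>\<^sup>+x. ennreal (1/x) * indicator {a..b} x \<partial>lborel) = ennreal (ln b - ln a)"
  using assms by (intro nn_integral_FTC_Icc) (auto intro!: derivative_eq_intros)

lemma fint:
  assumes t: "0 < t" "t \<le> 1"
  shows "(\<integral>\<^sup>+x. ennreal (if 0 < x \<and> x \<le> 1 \<and> x*(1-x) \<le> t \<and> t \<le> x then 1/x else 0) \<partial>lborel) = ennreal (ff t)"
proof (cases "1/4 \<le> t")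
  case True
  have "(\<integral>\<^sup>+x. ennreal (if 0 < x \<and> x \<le> 1 \<and> x*(1-x) \<le> t \<and> t \<le> x then 1/x else 0) \<partial>lborel)
      = (\<integral>\<^sup>+x. ennreal (1/x) * indicator {t..1} x \<partial>lborel)"
  proof (intro nn_integral_cong)
    fix x :: real
    have "0 \<le> (2*x-1) * (2*x-1)" by simp
    hence "x*(1-x) \<le> 1/4" by (simp add: algebra_simps)
    thus "ennreal (if 0 < x \<and> x \<le> 1 \<and> x*(1-x) \<le> t \<and> t \<le> x then 1/x else 0) = ennreal (1/x) * indicator {t..1} x"
      using True t by (auto split: split_indicator)
  qed
  also have "\<dots> = ennreal (ln 1 - ln t)" using t by (intro ftc_inv) auto
  finally show ?thesis using True by (simp add: ff_def)
next
  case False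
  have tl: "t < 1/4" using False by simp
  note q = rm_rp[OF t(1) tl]
  have "(\<integral>\<^sup>+x. ennreal (if 0 < x \<and> x \<le> 1 \<and> x*(1-x) \<le> t \<and> t \<le> x then 1/x else 0) \<partial>lborel)
      = (\<integral>\<^sup>+x. ennreal (1/x) * indicator {t..rm t} x + ennreal (1/x) * indicator {rp t..1} x \<partial>lborel)"
  proof (intro nn_integral_cong)
    fix x :: real
    have c: "x * (1 - x) \<le> t \<longleftrightarrow> x \<le> rm t \<or> rp t \<le> x" using q by auto
    show "ennreal (if 0 < x \<and> x \<le> 1 \<and> x*(1-x) \<le> t \<and> t \<le> x then 1/x else 0) =
      ennreal (1/x) * indicator {t..rm t} x + ennreal (1/x) * indicator {rp t..1} x"
      unfolding c using q t by (auto split: split_indicator)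
  qed
  also have "\<dots> = (\<integral>\<^sup>+x. ennreal (1/x) * indicator {t..rm t} x \<partial>lborel) + (\<integral>\<^sup>+x. ennreal (1/x) * indicator {rp t..1} x \<partial>lborel)"
    by (rule nn_integral_add) measurable
  also have "\<dots> = ennreal (ln (rm t) - ln t) + ennreal (ln 1 - ln (rp t))"
    using q t by (simp add: ftc_inv)
  also have "\<dots> = ennreal (ln (rm t) - ln t - ln (rp t))"
    using q t by (subst ennreal_plus[symmetric]) auto
  also have "ln (rm t) - ln t - ln (rp t) = ff t"
  proof -
    have rp0: "0 < rp t" using q by linarith
    have "ln (rm t * rp t) = ln (rm t) + ln (rp t)" using q(3) rp0 by (simp add: ln_mult)
    hence "ln t = ln (rm t) + ln (rp t)" using q by simp
    thus ?thesis using False by (simp add: ff_def f2_def)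
  qed
  finally show ?thesis .
qed


definition gg :: "nat \<Rightarrow> real \<Rightarrow> real" where "gg n t = (- ln t)^n / t"

lemma integrand_eq: "integrand n p = gg n (fst p * snd p)"
  by (cases p) (simp add: integrand_def gg_def)

lemma T_ind: "indicator T p = (if 0 \<le> fst p \<and> fst p \<le> 1 \<and> 0 \<le> snd p \<and> snd p \<le> 1 \<and> 1 \<le> fst p + snd p then 1 else (0::real))"
  by (cases p) (simp add: T_def indicator_def)

lemma gg_nonneg: "0 \<le> t \<Longrightarrow> t \<le> 1 \<Longrightarrow> 0 \<le> gg n t"
  by (cases "t = 0") (auto simp: gg_def intro!: divide_nonneg_pos zero_le_power)

lemma gg_zero[simp]: "gg n 0 = 0" by (simp add: gg_def)

lemma meas_F: "(\<lambda>p::real\<times>real. ennreal (indicator T p * integrand n p)) \<in> borel_measurable (lborel \<Otimes>\<^sub>M lborel)"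
  unfolding T_ind integrand_eq gg_def by measurable

lemma inner_y:
  "(\<integral>\<^sup>+y. ennreal (indicator T (x,y) * integrand n (x,y)) \<partial>lborel) =
   (\<integral>\<^sup>+u. ennreal (if 0 < x \<and> x \<le> 1 \<and> x*(1-x) \<le> u \<and> u \<le> x then gg n u / x else 0) \<partial>lborel)"
proof (cases "0 < x \<and> x \<le> 1")
  case True
  hence x: "0 < x" "x \<le> 1" by auto
  define G where "G = (\<lambda>y. ennreal (if 1 - x \<le> y \<and> y \<le> 1 then gg n (x*y) else 0))"
  have Gm[measurable]: "G \<in> borel_measurable borel" unfolding G_def gg_def by measurable
  have "(\<integral>\<^sup>+y. ennreal (indicator T (x,y) * integrand n (x,y)) \<partial>lborel) = (\<integral>\<^sup>+y. G y \<partial>lborel)"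
    using x by (intro nn_integral_cong) (auto simp: G_def T_ind integrand_eq)
  also have "\<dots> = \<bar>1/x\<bar> * (\<integral>\<^sup>+u. G (0 + (1/x) * u) \<partial>lborel)"
    using x by (intro nn_integral_real_affine) auto
  also have "\<dots> = ennreal (1/x) * (\<integral>\<^sup>+u. ennreal (if x*(1-x) \<le> u \<and> u \<le> x then gg n u else 0) \<partial>lborel)"
  proof -
    have "G (0 + (1/x) * u) = ennreal (if x*(1-x) \<le> u \<and> u \<le> x then gg n u else 0)" for u
    proof -
      have "1 - x \<le> u / x \<longleftrightarrow> x*(1-x) \<le> u" using x by (simp add: le_divide_eq mult.commute)
      moreover have "u / x \<le> 1 \<longleftrightarrow> u \<le> x" using x by (simp add: divide_le_eq)
      moreover have "x * (u / x) = u" using x by simp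
      ultimately show ?thesis by (simp add: G_def)
    qed
    thus ?thesis using x by simp
  qed
  also have "\<dots> = (\<integral>\<^sup>+u. ennreal (1/x) * ennreal (if x*(1-x) \<le> u \<and> u \<le> x then gg n u else 0) \<partial>lborel)"
    by (rule nn_integral_cmult[symmetric]) (unfold gg_def, measurable)
  also have "\<dots> = (\<integral>\<^sup>+u. ennreal (if 0 < x \<and> x \<le> 1 \<and> x*(1-x) \<le> u \<and> u \<le> x then gg n u / x else 0) \<partial>lborel)"
  proof (intro nn_integral_cong)
    fix u :: real
    show "ennreal (1/x) * ennreal (if x*(1-x) \<le> u \<and> u \<le> x then gg n u else 0) =
          ennreal (if 0 < x \<and> x \<le> 1 \<and> x*(1-x) \<le> u \<and> u \<le> x then gg n u / x else 0)"
    proof (cases "x*(1-x) \<le> u \<and> u \<le> x")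
      case True
      have "0 \<le> x*(1-x)" using x by simp
      hence u0: "0 \<le> u" using True by linarith
      hence "0 \<le> gg n u" using True x by (intro gg_nonneg) auto
      thus ?thesis using True x by (simp add: ennreal_mult[symmetric] divide_inverse mult.commute)
    qed auto
  qed
  finally show ?thesis .
next
  case False
  have z: "(\<lambda>y. ennreal (indicator T (x,y) * integrand n (x,y))) = (\<lambda>y. 0)"
  proof (rule ext)
    fix y :: real
    show "ennreal (indicator T (x,y) * integrand n (x,y)) = 0"
    proof (cases "x = 0")
      case True thus ?thesis by (simp add: T_ind integrand_eq)
    next
      case False thus ?thesis using \<open>\<not> (0 < x \<and> x \<le> 1)\<close> by (auto simp: T_ind integrand_eq)
    qed
  qed
  have "(\<integral>\<^sup>+y. ennreal (indicator T (x,y) * integrand n (x,y)) \<partial>lborel) = (\<integral>\<^sup>+y. 0 \<partial>(lborel::real measure))"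
    by (simp only: z)
  also have "\<dots> = (\<integral>\<^sup>+u. ennreal (if 0 < x \<and> x \<le> 1 \<and> x*(1-x) \<le> u \<and> u \<le> x then gg n u / x else 0) \<partial>lborel)"
  proof -
    have "(\<lambda>u. ennreal (if 0 < x \<and> x \<le> 1 \<and> x*(1-x) \<le> u \<and> u \<le> x then gg n u / x else 0)) = (\<lambda>u. 0)"
      using False by (intro ext) auto
    thus ?thesis by (simp only:)
  qed
  finally show ?thesis .
qed

lemma inner_x:
  "(\<integral>\<^sup>+x. ennreal (if 0 < x \<and> x \<le> 1 \<and> x*(1-x) \<le> u \<and> u \<le> x then gg n u / x else 0) \<partial>lborel) =
   ennreal (gg n u * ff u * indicator {0<..1} u)"
proof (cases "0 < u \<and> u \<le> 1")
  case True
  have g0: "0 \<le> gg n u" using True by (intro gg_nonneg) auto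
  have f0: "0 \<le> ff u" using True ff_range by auto
  have "(\<integral>\<^sup>+x. ennreal (if 0 < x \<and> x \<le> 1 \<and> x*(1-x) \<le> u \<and> u \<le> x then gg n u / x else 0) \<partial>lborel)
     = (\<integral>\<^sup>+x. ennreal (gg n u) * ennreal (if 0 < x \<and> x \<le> 1 \<and> x*(1-x) \<le> u \<and> u \<le> x then 1 / x else 0) \<partial>lborel)"
    using g0 by (intro nn_integral_cong) (auto simp: ennreal_mult[symmetric])
  also have "\<dots> = ennreal (gg n u) * (\<integral>\<^sup>+x. ennreal (if 0 < x \<and> x \<le> 1 \<and> x*(1-x) \<le> u \<and> u \<le> x then 1 / x else 0) \<partial>lborel)"
    by (rule nn_integral_cmult) measurable
  also have "\<dots> = ennreal (gg n u) * ennreal (ff u)" using True by (simp add: fint)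
  finally show ?thesis using True g0 f0 by (simp add: ennreal_mult[symmetric])
next
  case False
  have "ennreal (if 0 < x \<and> x \<le> 1 \<and> x*(1-x) \<le> u \<and> u \<le> x then gg n u / x else 0) = 0" for x
  proof (cases "0 < x \<and> x \<le> 1 \<and> x*(1-x) \<le> u \<and> u \<le> x")
    case True
    show ?thesis
    proof (cases "x = 1")
      case True thus ?thesis using \<open>0 < x \<and> x \<le> 1 \<and> x*(1-x) \<le> u \<and> u \<le> x\<close> False by auto
    next
      case x1: False
      hence "0 < x * (1 - x)" using True by auto
      thus ?thesis using True False by auto
    qed
  qed auto
  thus ?thesis using False by simp
qed

lemma twoD:
  "(\<integral>\<^sup>+p. ennreal (indicator T p * integrand n p) \<partial>lborel) =
   (\<integral>\<^sup>+u. ennreal (gg n u * ff u * indicator {0<..1} u) \<partial>lborel)"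
proof -
  have "(\<integral>\<^sup>+p. ennreal (indicator T p * integrand n p) \<partial>lborel) =
        (\<integral>\<^sup>+p. ennreal (indicator T p * integrand n p) \<partial>(lborel \<Otimes>\<^sub>M lborel))"
    by (simp only: lborel_prod)
  also have "\<dots> = (\<integral>\<^sup>+x. \<integral>\<^sup>+y. ennreal (indicator T (x,y) * integrand n (x,y)) \<partial>lborel \<partial>lborel)"
    by (rule lborel.nn_integral_fst[symmetric]) (rule meas_F)
  also have "\<dots> = (\<integral>\<^sup>+x. \<integral>\<^sup>+u. ennreal (if 0 < x \<and> x \<le> 1 \<and> x*(1-x) \<le> u \<and> u \<le> x then gg n u / x else 0) \<partial>lborel \<partial>lborel)"
    by (intro nn_integral_cong inner_y)
  also have "\<dots> = (\<integral>\<^sup>+u. \<integral>\<^sup>+x. ennreal (if 0 < x \<and> x \<le> 1 \<and> x*(1-x) \<le> u \<and> u \<le> x then gg n u / x else 0) \<partial>lborel \<partial>lborel)"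
    by (rule lborel_pair.Fubini'[symmetric]) (unfold gg_def, measurable)
  also have "\<dots> = (\<integral>\<^sup>+u. ennreal (gg n u * ff u * indicator {0<..1} u) \<partial>lborel)"
    by (intro nn_integral_cong inner_x)
  finally show ?thesis .
qed


definition SK :: "nat \<Rightarrow> nat \<Rightarrow> real" where "SK K n = (\<Sum>j=1..K. cc j / real j ^ (n + 2))"

lemma A_nonneg: "0 \<le> gg n u * u^j * indicator {0<..1} u"
  by (cases "0 < u \<and> u \<le> 1") (auto intro!: mult_nonneg_nonneg gg_nonneg)

lemma A_int: "j \<ge> 1 \<Longrightarrow> (\<integral>\<^sup>+u. ennreal (gg n u * u^j * indicator {0<..1} u) \<partial>lborel) = ennreal (fact n / real j^(n+1))"
  unfolding gg_def by (rule gamma_j)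

lemma L_int:
  "(\<integral>\<^sup>+u. ennreal (gg n u * PK K u * indicator {0<..1} u) \<partial>lborel) = ennreal (fact n * SK K n)"
proof -
  have "(\<integral>\<^sup>+u. ennreal (gg n u * PK K u * indicator {0<..1} u) \<partial>lborel) =
        (\<integral>\<^sup>+u. (\<Sum>j\<in>{1..K}. ennreal (cc j / j * (gg n u * u^j * indicator {0<..1} u))) \<partial>lborel)"
  proof (intro nn_integral_cong)
    fix u :: real
    have "gg n u * PK K u * indicator {0<..1} u = (\<Sum>j\<in>{1..K}. cc j / j * (gg n u * u^j * indicator {0<..1} u))"
      unfolding PK_def by (simp add: sum_distrib_left sum_distrib_right mult_ac)
    moreover have "0 \<le> cc j / j * (gg n u * u^j * indicator {0<..1} u)" for j
      using A_nonneg[of n u j] cc_nonneg[of j] by simp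
    ultimately show "ennreal (gg n u * PK K u * indicator {0<..1} u) = (\<Sum>j\<in>{1..K}. ennreal (cc j / j * (gg n u * u^j * indicator {0<..1} u)))"
      by (simp add: sum_ennreal)
  qed
  also have "\<dots> = (\<Sum>j\<in>{1..K}. \<integral>\<^sup>+u. ennreal (cc j / j * (gg n u * u^j * indicator {0<..1} u)) \<partial>lborel)"
    by (rule nn_integral_sum) (unfold gg_def, measurable)
  also have "\<dots> = (\<Sum>j\<in>{1..K}. ennreal (cc j / j * (fact n / real j^(n+1))))"
  proof (intro sum.cong refl)
    fix j assume j: "j \<in> {1..K}"
    have c0: "0 \<le> cc j / j" using cc_nonneg[of j] by simp
    have "(\<integral>\<^sup>+u. ennreal (cc j / j * (gg n u * u^j * indicator {0<..1} u)) \<partial>lborel) =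
          (\<integral>\<^sup>+u. ennreal (cc j / j) * ennreal (gg n u * u^j * indicator {0<..1} u) \<partial>lborel)"
      by (intro nn_integral_cong) (rule ennreal_mult'[OF c0])
    also have "\<dots> = ennreal (cc j / j) * (\<integral>\<^sup>+u. ennreal (gg n u * u^j * indicator {0<..1} u) \<partial>lborel)"
      by (rule nn_integral_cmult) (unfold gg_def, measurable)
    also have "\<dots> = ennreal (cc j / j) * ennreal (fact n / real j^(n+1))" using j by (simp add: A_int)
    also have "\<dots> = ennreal (cc j / j * (fact n / real j^(n+1)))" by (rule ennreal_mult'[OF c0, symmetric])
    finally show "(\<integral>\<^sup>+u. ennreal (cc j / j * (gg n u * u^j * indicator {0<..1} u)) \<partial>lborel) = ennreal (cc j / j * (fact n / real j^(n+1)))" .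
  qed
  also have "\<dots> = ennreal (\<Sum>j\<in>{1..K}. cc j / j * (fact n / real j^(n+1)))"
    using cc_nonneg by (intro sum_ennreal) (auto intro!: mult_nonneg_nonneg divide_nonneg_nonneg)
  also have "(\<Sum>j\<in>{1..K}. cc j / j * (fact n / real j^(n+1))) = fact n * SK K n"
    unfolding SK_def by (simp add: sum_distrib_left field_simps)
  finally show ?thesis .
qed

definition J :: "nat \<Rightarrow> ennreal" where
  "J n = (\<integral>\<^sup>+p. ennreal (indicator T p * integrand n p) \<partial>lborel)"

lemma J_bounds:
  assumes K: "K \<ge> 1"
  shows "J n \<le> ennreal (fact n * SK K n) + ennreal (MK K * (fact n / real (K+1)^(n+1)))"
    and "ennreal (fact n * SK K n) \<le> J n + ennreal (MK K * (fact n / real (K+1)^(n+1)))"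
proof -
  have M0: "0 \<le> MK K" unfolding MK_def using cc_nonneg
    by (intro mult_nonneg_nonneg) (auto intro!: sum_nonneg add_nonneg_nonneg)
  have E: "(\<integral>\<^sup>+u. ennreal (MK K * (gg n u * u^(K+1) * indicator {0<..1} u)) \<partial>lborel) =
        ennreal (MK K * (fact n / real (K+1)^(n+1)))"
  proof -
    have "(\<integral>\<^sup>+u. ennreal (MK K * (gg n u * u^(K+1) * indicator {0<..1} u)) \<partial>lborel) =
          (\<integral>\<^sup>+u. ennreal (MK K) * ennreal (gg n u * u^(K+1) * indicator {0<..1} u) \<partial>lborel)"
      by (intro nn_integral_cong) (rule ennreal_mult'[OF M0])
    also have "\<dots> = ennreal (MK K) * (\<integral>\<^sup>+u. ennreal (gg n u * u^(K+1) * indicator {0<..1} u) \<partial>lborel)"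
      by (rule nn_integral_cmult) (unfold gg_def, measurable)
    also have "\<dots> = ennreal (MK K) * ennreal (fact n / real (K+1)^(n+1))"
      using A_int[of "K+1" n] by simp
    also have "\<dots> = ennreal (MK K * (fact n / real (K+1)^(n+1)))" by (rule ennreal_mult'[OF M0, symmetric])
    finally show ?thesis .
  qed
  have JJ: "J n = (\<integral>\<^sup>+u. ennreal (gg n u * ff u * indicator {0<..1} u) \<partial>lborel)"
    unfolding J_def by (rule twoD)
  have pw: "ennreal (gg n u * ff u * indicator {0<..1} u) \<le> ennreal (gg n u * PK K u * indicator {0<..1} u) + ennreal (MK K * (gg n u * u^(K+1) * indicator {0<..1} u))
     \<and> ennreal (gg n u * PK K u * indicator {0<..1} u) \<le> ennreal (gg n u * ff u * indicator {0<..1} u) + ennreal (MK K * (gg n u * u^(K+1) * indicator {0<..1} u))" for u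
  proof (cases "0 < u \<and> u \<le> 1")
    case True
    have g0: "0 \<le> gg n u" using True by (intro gg_nonneg) auto
    have f0: "0 \<le> ff u" using True ff_range by auto
    have p0: "0 \<le> PK K u" using True by (intro PK_nonneg) auto
    have e0: "0 \<le> MK K * (gg n u * u^(K+1))" using M0 g0 True by simp
    have b1: "gg n u * ff u \<le> gg n u * PK K u + MK K * (gg n u * u^(K+1))"
    proof -
      have "gg n u * ff u \<le> gg n u * (PK K u + MK K * u^(K+1))"
        using ff_bound(1)[of u K] True g0 by (intro mult_left_mono) auto
      thus ?thesis by (simp add: algebra_simps)
    qed
    have b2: "gg n u * PK K u \<le> gg n u * ff u + MK K * (gg n u * u^(K+1))"
    proof -
      have "gg n u * PK K u \<le> gg n u * (ff u + MK K * u^(K+1))"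
        using ff_bound(2)[of u K] True g0 by (intro mult_left_mono) auto
      thus ?thesis by (simp add: algebra_simps)
    qed
    show ?thesis using True g0 f0 p0 e0 b1 b2
      by (simp add: ennreal_plus[symmetric] del: ennreal_plus)
  qed simp
  have "J n \<le> (\<integral>\<^sup>+u. ennreal (gg n u * PK K u * indicator {0<..1} u) + ennreal (MK K * (gg n u * u^(K+1) * indicator {0<..1} u)) \<partial>lborel)"
    unfolding JJ using pw by (intro nn_integral_mono) auto
  also have "\<dots> = (\<integral>\<^sup>+u. ennreal (gg n u * PK K u * indicator {0<..1} u) \<partial>lborel) + (\<integral>\<^sup>+u. ennreal (MK K * (gg n u * u^(K+1) * indicator {0<..1} u)) \<partial>lborel)"
    by (rule nn_integral_add) (unfold gg_def PK_def, measurable)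
  finally show "J n \<le> ennreal (fact n * SK K n) + ennreal (MK K * (fact n / real (K+1)^(n+1)))"
    using L_int E by simp
  have "ennreal (fact n * SK K n) = (\<integral>\<^sup>+u. ennreal (gg n u * PK K u * indicator {0<..1} u) \<partial>lborel)"
    using L_int by simp
  also have "\<dots> \<le> (\<integral>\<^sup>+u. ennreal (gg n u * ff u * indicator {0<..1} u) + ennreal (MK K * (gg n u * u^(K+1) * indicator {0<..1} u)) \<partial>lborel)"
    using pw by (intro nn_integral_mono) auto
  also have "\<dots> = (\<integral>\<^sup>+u. ennreal (gg n u * ff u * indicator {0<..1} u) \<partial>lborel) + (\<integral>\<^sup>+u. ennreal (MK K * (gg n u * u^(K+1) * indicator {0<..1} u)) \<partial>lborel)"
    by (rule nn_integral_add) (unfold gg_def ff_def f2_def rp_def, measurable)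
  finally show "ennreal (fact n * SK K n) \<le> J n + ennreal (MK K * (fact n / real (K+1)^(n+1)))"
    using JJ E by simp
qed


lemma meas_R: "(\<lambda>p::real\<times>real. indicator T p * integrand n p) \<in> borel_measurable (lborel \<Otimes>\<^sub>M lborel)"
  unfolding T_ind integrand_eq gg_def by measurable

lemma meas_R': "(\<lambda>p::real\<times>real. indicator T p * integrand n p) \<in> borel_measurable lborel"
  using meas_R by (simp add: lborel_prod)

lemma nonneg_R: "0 \<le> indicator T p * integrand n p"
proof (cases "p \<in> T")
  case True
  then obtain x y where p: "p = (x,y)" "0 \<le> x" "x \<le> 1" "0 \<le> y" "y \<le> 1" by (cases p) (auto simp: T_def)
  have "x * y \<le> 1" using p by (simp add: mult_le_one)
  thus ?thesis using True p by (auto simp: integrand_eq intro!: gg_nonneg)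
qed simp

lemma SK_nonneg: "0 \<le> SK K n"
  unfolding SK_def using cc_nonneg by (auto intro!: sum_nonneg divide_nonneg_nonneg)

lemma MK_nonneg: "0 \<le> MK K" unfolding MK_def using cc_nonneg
  by (intro mult_nonneg_nonneg) (auto intro!: sum_nonneg add_nonneg_nonneg)

lemma J_fin: "J n < top"
proof -
  have "J n \<le> ennreal (fact n * SK 1 n) + ennreal (MK 1 * (fact n / real (1+1)^(n+1)))"
    by (rule J_bounds(1)) simp
  also have "\<dots> < top" by simp
  finally show ?thesis .
qed

lemma integrable_n: "set_integrable lborel T (integrand n)"
  unfolding set_integrable_def
proof (rule integrableI_nonneg)
  show "(\<lambda>p. indicator T p *\<^sub>R integrand n p) \<in> borel_measurable lborel" using meas_R' by simp
  show "AE p in lborel. 0 \<le> indicator T p *\<^sub>R integrand n p" using nonneg_R by simp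
  show "(\<integral>\<^sup>+p. ennreal (indicator T p *\<^sub>R integrand n p) \<partial>lborel) < \<infinity>"
    using J_fin[of n] by (simp add: J_def)
qed

lemma I_J: "ennreal (I n) = J n"
proof -
  have "I n = enn2real (J n)"
    unfolding I_def set_lebesgue_integral_def J_def
    using meas_R' nonneg_R by (simp add: integral_eq_nn_integral)
  thus ?thesis using J_fin[of n] by simp
qed

lemma I_nonneg: "0 \<le> I n"
  unfolding I_def set_lebesgue_integral_def using nonneg_R by (simp add: integral_nonneg)

lemma main_bound:
  assumes K: "K \<ge> 1"
  shows "\<bar>I n / fact n - SK K n\<bar> \<le> MK K / real (K+1)^(n+1)"
proof -
  define E where "E = MK K * (fact n / real (K+1)^(n+1))"
  have E0: "0 \<le> E" unfolding E_def using MK_nonneg by simp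
  have S0: "0 \<le> fact n * SK K n" using SK_nonneg by simp
  have "ennreal (I n) \<le> ennreal (fact n * SK K n) + ennreal E"
    using J_bounds(1)[OF K, of n] I_J by (simp add: E_def)
  hence u: "I n \<le> fact n * SK K n + E" using E0 S0 by (simp del: ennreal_plus add: ennreal_plus[symmetric])
  have "ennreal (fact n * SK K n) \<le> ennreal (I n) + ennreal E"
    using J_bounds(2)[OF K, of n] I_J by (simp add: E_def)
  hence l: "fact n * SK K n \<le> I n + E" using E0 I_nonneg[of n] by (simp del: ennreal_plus add: ennreal_plus[symmetric])
  have "\<bar>I n - fact n * SK K n\<bar> \<le> E" using u l by linarith
  hence "\<bar>I n - fact n * SK K n\<bar> / fact n \<le> E / fact n" by (simp add: divide_right_mono)
  moreover have "\<bar>I n - fact n * SK K n\<bar> / fact n = \<bar>I n / fact n - SK K n\<bar>"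
    by (simp add: abs_div_pos diff_divide_distrib)
  moreover have "E / fact n = MK K / real (K+1)^(n+1)" by (simp add: E_def)
  ultimately show ?thesis by simp
qed

theorem theorem3:
  shows "(\<forall>n. set_integrable lborel T (integrand n))
    \<and> (I \<sim>[at_top] (\<lambda>n. 2 * fact n))
    \<and> (\<forall>K::nat. K \<ge> 1 \<longrightarrow>
         (\<lambda>n. I n / fact n - (\<Sum>j=1..K. real ((2*j) choose j) / real j ^ (n + 2)))
           \<in> O(\<lambda>n. real (K + 1) powr - real n))"
proof (intro conjI allI impI)
  show "set_integrable lborel T (integrand n)" for n by (rule integrable_n)
next
  fix K :: nat assume K: "K \<ge> 1"
  have eqS: "(\<Sum>j=1..K. real ((2*j) choose j) / real j ^ (n + 2)) = SK K n" for n
    by (simp add: SK_def cc_def)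
  show "(\<lambda>n. I n / fact n - (\<Sum>j=1..K. real ((2*j) choose j) / real j ^ (n + 2)))
           \<in> O(\<lambda>n. real (K + 1) powr - real n)"
    unfolding eqS
  proof (rule bigoI[where c = "MK K"])
    show "eventually (\<lambda>n. norm (I n / fact n - SK K n) \<le> MK K * norm (real (K + 1) powr - real n)) at_top"
    proof (intro always_eventually allI)
      fix n
      have "norm (I n / fact n - SK K n) \<le> MK K / real (K+1)^(n+1)" using main_bound[OF K] by simp
      also have "\<dots> \<le> MK K / real (K+1)^n"
        using MK_nonneg by (intro divide_left_mono) auto
      also have "\<dots> = MK K * norm (real (K + 1) powr - real n)"
        by (simp add: powr_minus powr_realpow divide_inverse)
      finally show "norm (I n / fact n - SK K n) \<le> MK K * norm (real (K + 1) powr - real n)" .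
    qed
  qed
next
  show "I \<sim>[at_top] (\<lambda>n. 2 * fact n)"
  proof (rule asymp_equivI')
    have S1: "SK 1 n = 2" for n by (simp add: SK_def cc_def)
    have g: "(\<lambda>n. MK 1 * ((1/2) * (1/2)^n)) \<longlonglongrightarrow> MK 1 * ((1/2) * 0)"
      by (intro tendsto_mult tendsto_const LIMSEQ_power_zero) simp
    have "(\<lambda>n. I n / fact n - 2) \<longlonglongrightarrow> 0"
    proof (rule Lim_null_comparison)
      show "eventually (\<lambda>n. norm (I n / fact n - 2) \<le> MK 1 * ((1/2) * (1/2)^n)) sequentially"
      proof (intro always_eventually allI)
        fix n
        have "norm (I n / fact n - 2) \<le> MK 1 / real (1+1)^(n+1)" using main_bound[of 1 n] S1 by simp
        also have "\<dots> = MK 1 * ((1/2) * (1/2)^n)" by (simp add: power_divide field_simps)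
        finally show "norm (I n / fact n - 2) \<le> MK 1 * ((1/2) * (1/2)^n)" .
      qed
      show "(\<lambda>n. MK 1 * ((1/2) * (1/2)^n)) \<longlonglongrightarrow> 0" using g by simp
    qed
    hence "(\<lambda>n. (I n / fact n - 2) / 2 + 1) \<longlonglongrightarrow> 0 / 2 + 1"
      by (intro tendsto_add tendsto_divide tendsto_const) auto
    moreover have "(\<lambda>n. (I n / fact n - 2) / 2 + 1) = (\<lambda>n. I n / (2 * fact n))"
      by (rule ext) (simp add: field_simps)
    ultimately show "(\<lambda>n. I n / (2 * fact n)) \<longlonglongrightarrow> 1" by simp
  qed
qed


end
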